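(* Let $p\ge 3$ be a prime, let $r=\lfloor\sqrt{p}\rfloor$ and $s=\lfloor\frac{p-2}{r}\rfloor$, and let $t$ be any integer with $0\le t\le p-r$. Then the set $$\{(x,x):x\in\mathbb{F}_p\}\ \cup\ \big([t,t+r-1]\times\{0,r,2r,\ldots,sr,p-1\}\big)\subseteq\mathbb{F}_p^2$$ is a $1$-blocking set in $\mathbb{F}_p^2$, i.e., it meets every affine line of $\mathbb{F}_p^2$ in at least one point.
   Context: $\mathbb{F}_p$ is identified with $\{0,1,\ldots,p-1\}$ with the ordering inherited from $\mathbb{Z}$; for integers $m\le n$, $[m,n]$ denotes $\{m,m+1,\ldots,n\}$ (viewed as elements of $\mathbb{F}_p$). An affine line in $\mathbb{F}_p^2$ is a set $\{\mathbf{a}+\lambda\mathbf{v}:\lambda\in\mathbb{F}_p\}$ with $\mathbf{v}\neq\mathbf{0}$. *)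

theory Defs
  imports "HOL-Analysis.Analysis" "HOL-Computational_Algebra.Primes"
begin

text \<open>F_p is modelled as the integers {0..<p}, with arithmetic taken mod p.
  Points of F_p^2 are pairs of such integers.\<close>

definition Fp :: "int \<Rightarrow> int set" where
  "Fp p = {0..<p}"

definition affine_line :: "int \<Rightarrow> int \<times> int \<Rightarrow> int \<times> int \<Rightarrow> (int \<times> int) set" where
  "affine_line p a v =
     {((fst a + l * fst v) mod p, (snd a + l * snd v) mod p) | l. l \<in> Fp p}"

definition is_affine_line :: "int \<Rightarrow> (int \<times> int) set \<Rightarrow> bool" where
  "is_affine_line p L \<longleftrightarrow>
     (\<exists>a v. a \<in> Fp p \<times> Fp p \<and> v \<in> Fp p \<times> Fp p \<and> v \<noteq> (0, 0) \<and> L = affine_line p a v)"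

definition blocking_set_1 :: "int \<Rightarrow> (int \<times> int) set \<Rightarrow> bool" where
  "blocking_set_1 p B \<longleftrightarrow> B \<subseteq> Fp p \<times> Fp p \<and>
     (\<forall>L. is_affine_line p L \<longrightarrow> L \<inter> B \<noteq> {})"

end

theory Submission
  imports Defs "HOL-Number_Theory.Cong"
begin

lemma solve_lin:
  fixes p w d :: int
  assumes "prime p" "\<not> p dvd w"
  shows "\<exists>l \<in> Fp p. (l * w) mod p = d mod p"
proof -
  have "coprime w p" using prime_imp_coprime[OF assms] by (simp add: coprime_commute)
  then obtain u where u: "[w * u = 1] (mod p)" using cong_solve_coprime_int by blast
  have p0: "p > 0" using assms(1) prime_gt_0_int by blast
  define l where "l = (u * d) mod p"
  have "l \<in> Fp p" using p0 by (simp add: l_def Fp_def)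
  moreover have "[l * w = d] (mod p)"
  proof -
    have "[l * w = (u*d) * w] (mod p)" unfolding l_def cong_def by (simp add: mod_mult_left_eq)
    moreover have "[(u*d)*w = (w*u) * d] (mod p)" by (simp add: ac_simps)
    moreover have "[(w*u) * d = 1 * d] (mod p)" using u by (rule cong_mult) simp
    ultimately show ?thesis by (metis cong_trans mult_1)
  qed
  ultimately show ?thesis unfolding cong_def by blast
qed

lemma window:
  fixes p r s m :: int
  assumes "r \<ge> 1" "s = (p - 2) div r" "p \<ge> 3" "0 \<le> m" "m < p"
  shows "\<exists>y. y \<in> {k * r | k. 0 \<le> k \<and> k \<le> s} \<union> {p - 1} \<and> m \<le> y \<and> y \<le> m + r - 1 \<and> y < p"
proof -
  have sr: "s * r \<le> p - 2" "p - 2 < s * r + r"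
    using assms(1,2) by (smt (verit) div_mult_mod_eq mult.commute pos_mod_bound pos_mod_sign)+
  show ?thesis
  proof (cases "m \<le> s * r")
    case True
    define k where "k = (m + r - 1) div r"
    define q where "q = (m + r - 1) mod r"
    have e: "m + r - 1 = k * r + q" unfolding k_def q_def by simp
    have q: "0 \<le> q" "q < r" using assms(1) unfolding q_def by simp_all
    have k0: "0 \<le> k" unfolding k_def using assms by (simp add: pos_imp_zdiv_nonneg_iff)
    have ks: "k \<le> s"
    proof (rule ccontr)
      assume "\<not> k \<le> s"
      then have "(s+1) * r \<le> k * r" using assms(1) by (intro mult_right_mono) auto
      then show False using e q True by (simp add: algebra_simps)
    qed
    have ksr: "k * r \<le> s * r" using ks assms(1) by (intro mult_right_mono) auto
    have mem: "k * r \<in> {k * r | k. 0 \<le> k \<and> k \<le> s} \<union> {p - 1}" using k0 ks by blast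
    show ?thesis
      apply (rule exI[of _ "k*r"])
      apply (intro conjI)
      using mem apply blast
      using e q ksr sr by linarith+
  next
    case False
    then show ?thesis using sr assms(5) by (intro exI[of _ "p - 1"]) auto
  qed
qed

theorem lemma1:
  fixes p r s t :: int
  assumes "prime p" and "p \<ge> 3"
    and "r = \<lfloor>sqrt (real_of_int p)\<rfloor>"
    and "s = (p - 2) div r"
    and "0 \<le> t" and "t \<le> p - r"
  shows "blocking_set_1 p
     ({(x, x) | x. x \<in> Fp p} \<union>
      ({t..t + r - 1} \<times> ({k * r | k. 0 \<le> k \<and> k \<le> s} \<union> {p - 1})))"
proof -
  have r1: "r \<ge> 1"
  proof -
    have "sqrt (real_of_int p) \<ge> 1" using assms(2) by simp
    then show ?thesis using assms(3) by (simp add: le_floor_iff)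
  qed
  have sr: "s * r \<le> p - 2"
    using r1 assms(4) by (smt (verit) div_mult_mod_eq mult.commute pos_mod_bound pos_mod_sign)
  let ?Y = "{k * r | k. 0 \<le> k \<and> k \<le> s} \<union> {p - 1}"
  let ?B = "{(x, x) | x. x \<in> Fp p} \<union> ({t..t + r - 1} \<times> ?Y)"
  have sub: "?B \<subseteq> Fp p \<times> Fp p"
  proof
    fix z assume "z \<in> ?B"
    then show "z \<in> Fp p \<times> Fp p"
    proof
      assume "z \<in> {(x, x) | x. x \<in> Fp p}" then show ?thesis by auto
    next
      assume z: "z \<in> {t..t + r - 1} \<times> ?Y"
      have "y \<in> Fp p" if "y \<in> ?Y" for y
      proof -
        from that consider "y = p - 1" | k where "y = k * r" "0 \<le> k" "k \<le> s" by auto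
        then show ?thesis
        proof cases
          case 1 then show ?thesis using assms(2) by (simp add: Fp_def)
        next
          case 2
          have a: "k * r \<le> s * r" using 2 r1 by (intro mult_right_mono) auto
          have b: "0 \<le> k * r" using 2 r1 by simp
          show ?thesis unfolding Fp_def 2(1) atLeastLessThan_iff using a b sr by linarith
        qed
      qed
      then show ?thesis using z assms(5,6) by (auto simp: Fp_def)
    qed
  qed
  have p0: "p > 0" using assms(2) by simp
  have lines: "L \<inter> ?B \<noteq> {}" if "is_affine_line p L" for L
  proof -
    from that obtain a1 a2 v1 v2 where av: "(a1,a2) \<in> Fp p \<times> Fp p" "(v1,v2) \<in> Fp p \<times> Fp p"
      "(v1,v2) \<noteq> (0,0)" and L: "L = affine_line p (a1,a2) (v1,v2)"
      unfolding is_affine_line_def by auto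
    have mem: "((a1 + l * v1) mod p, (a2 + l * v2) mod p) \<in> L" if "l \<in> Fp p" for l
      using that unfolding L affine_line_def by auto
    show ?thesis
    proof (cases "v1 = v2")
      case False
      have "\<not> p dvd (v2 - v1)"
      proof
        assume "p dvd (v2 - v1)"
        then obtain c where c: "v2 - v1 = p * c" by (auto elim: dvdE)
        have "\<bar>v2 - v1\<bar> < p" using av(2) by (auto simp: Fp_def)
        then have "\<bar>p * c\<bar> < p" using c by simp
        then have "p * \<bar>c\<bar> < p * 1" using p0 by (simp add: abs_mult)
        then have "\<bar>c\<bar> < 1" using p0 by (simp only: mult_less_cancel_left_pos)
        then have "c = 0" by simp
        then show False using c False by simp
      qed
      then obtain l where l: "l \<in> Fp p" "(l * (v2 - v1)) mod p = (a1 - a2) mod p"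
        using solve_lin[OF assms(1)] by blast
      have "(a1 + l * v1) mod p = (a2 + l * v2) mod p"
      proof -
        have "[l * (v2 - v1) = a1 - a2] (mod p)" using l(2) by (simp add: cong_def)
        then have "[a2 + l * (v2 - v1) + l * v1 = a2 + (a1 - a2) + l * v1] (mod p)"
          by (intro cong_add) auto
        then show ?thesis by (simp add: cong_def algebra_simps)
      qed
      moreover have "(a1 + l * v1) mod p \<in> Fp p" using p0 by (simp add: Fp_def)
      ultimately have "((a1 + l * v1) mod p, (a2 + l * v2) mod p) \<in> ?B" by auto
      then show ?thesis using mem[OF l(1)] by blast
    next
      case True
      have w: "0 < v1" "v1 < p" using av True by (auto simp: Fp_def)
      have nd: "\<not> p dvd v1" using w zdvd_imp_le by fastforce
      obtain y where y: "y \<in> ?Y" "(t + (a2 - a1)) mod p \<le> y"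
        "y \<le> (t + (a2 - a1)) mod p + r - 1" "y < p"
        using window[OF r1 assms(4) assms(2), of "(t + (a2 - a1)) mod p"] p0 by auto
      define x where "x = t + y - (t + (a2 - a1)) mod p"
      have x: "x \<in> {t..t+r-1}" using y unfolding x_def by auto
      have xp: "0 \<le> x" "x < p" using x assms(5,6) by auto
      have y0: "0 \<le> y" using y p0 by (smt (verit) pos_mod_sign)
      obtain l where l: "l \<in> Fp p" "(l * v1) mod p = (x - a1) mod p"
        using solve_lin[OF assms(1) nd] by blast
      have c1: "[l * v1 = x - a1] (mod p)" using l(2) by (simp add: cong_def)
      have "(a1 + l * v1) mod p = x"
      proof -
        have "[a1 + l * v1 = a1 + (x - a1)] (mod p)" using c1 by (intro cong_add) auto
        then show ?thesis using xp by (simp add: cong_def)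
      qed
      moreover have "(a2 + l * v2) mod p = y"
      proof -
        have "[a2 + l * v1 = a2 + (x - a1)] (mod p)" using c1 by (intro cong_add) auto
        moreover have "[a2 + (x - a1) = (t + (a2 - a1)) + (y - (t + (a2 - a1)) mod p)] (mod p)"
          unfolding x_def by (simp add: algebra_simps)
        moreover have "[(t + (a2 - a1)) + (y - (t + (a2 - a1)) mod p) = (t + (a2 - a1)) mod p + (y - (t + (a2 - a1)) mod p)] (mod p)"
          by (intro cong_add) (auto simp: cong_def)
        ultimately have "[a2 + l * v1 = y] (mod p)" by (metis (no_types, lifting) cong_trans diff_add_cancel add.commute)
        then show ?thesis using True y0 y(4) by (simp add: cong_def)
      qed
      ultimately have "((a1 + l * v1) mod p, (a2 + l * v2) mod p) \<in> ?B" using x y(1) by auto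
      then show ?thesis using mem[OF l(1)] by blast
    qed
  qed
  show ?thesis unfolding blocking_set_1_def using sub lines by blast
qed

end
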